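(* Let $R$ be a ring with identity. The following are equivalent: (1) $R$ is von Neumann regular; (2) the matrix ring $\mathbb{M}_2(R)$ is SSP; (3) $\mathbb{M}_n(R)$ is SSP for some $n>1$; (4) $\mathbb{M}_n(R)$ is SSP for every $n>1$.
   Context: Rings are associative with identity. $\mathbb{M}_n(R)$ is the ring of $n\times n$ matrices over $R$. A ring $R$ is von Neumann regular if for every $a\in R$ there is $b\in R$ with $a=aba$. A ring $S$ is right SSP if the sum of any two direct summands of $S_S$ is again a direct summand of $S_S$; left SSP analogously with ${}_SS$; $S$ is SSP if it is both right and left SSP. *)

theory Defs
  imports "Jordan_Normal_Form.Matrix" "HOL-Algebra.AbelCoset"
begin

definition vN_regular :: "'a::ring_1 itself \<Rightarrow> bool" where
  "vN_regular _ \<longleftrightarrow> (\<forall>a::'a. \<exists>b. a = a * b * a)"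

definition right_ideal_of :: "('a, 'b) ring_scheme \<Rightarrow> 'a set \<Rightarrow> bool" where
  "right_ideal_of S I \<longleftrightarrow> additive_subgroup I S \<and>
     (\<forall>a\<in>I. \<forall>r\<in>carrier S. a \<otimes>\<^bsub>S\<^esub> r \<in> I)"

definition left_ideal_of :: "('a, 'b) ring_scheme \<Rightarrow> 'a set \<Rightarrow> bool" where
  "left_ideal_of S I \<longleftrightarrow> additive_subgroup I S \<and>
     (\<forall>a\<in>I. \<forall>r\<in>carrier S. r \<otimes>\<^bsub>S\<^esub> a \<in> I)"

definition right_summand :: "('a, 'b) ring_scheme \<Rightarrow> 'a set \<Rightarrow> bool" where
  "right_summand S I \<longleftrightarrow> right_ideal_of S I \<and>
     (\<exists>J. right_ideal_of S J \<and> I \<inter> J = {\<zero>\<^bsub>S\<^esub>} \<and> I <+>\<^bsub>S\<^esub> J = carrier S)"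

definition left_summand :: "('a, 'b) ring_scheme \<Rightarrow> 'a set \<Rightarrow> bool" where
  "left_summand S I \<longleftrightarrow> left_ideal_of S I \<and>
     (\<exists>J. left_ideal_of S J \<and> I \<inter> J = {\<zero>\<^bsub>S\<^esub>} \<and> I <+>\<^bsub>S\<^esub> J = carrier S)"

definition right_SSP :: "('a, 'b) ring_scheme \<Rightarrow> bool" where
  "right_SSP S \<longleftrightarrow> (\<forall>I J. right_summand S I \<and> right_summand S J \<longrightarrow>
      right_summand S (I <+>\<^bsub>S\<^esub> J))"

definition left_SSP :: "('a, 'b) ring_scheme \<Rightarrow> bool" where
  "left_SSP S \<longleftrightarrow> (\<forall>I J. left_summand S I \<and> left_summand S J \<longrightarrow>
      left_summand S (I <+>\<^bsub>S\<^esub> J))"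

definition SSP :: "('a, 'b) ring_scheme \<Rightarrow> bool" where
  "SSP S \<longleftrightarrow> right_SSP S \<and> left_SSP S"

abbreviation Mat_ring :: "'a::ring_1 itself \<Rightarrow> nat \<Rightarrow> 'a mat ring" where
  "Mat_ring ty n \<equiv> ring_mat ty n ()"

end

theory Submission
  imports Defs
begin

definition opp :: "('a,'b) ring_scheme \<Rightarrow> ('a,'b) ring_scheme" where
  "opp R = R\<lparr>mult := \<lambda>x y. y \<otimes>\<^bsub>R\<^esub> x\<rparr>"

lemma opp_simps[simp]: "carrier (opp R) = carrier R" "mult (opp R) x y = mult R y x"
  "add (opp R) = add R" "zero (opp R) = zero R" "one (opp R) = one R"
  by (auto simp: opp_def)

lemma ring_opp: assumes "ring R" shows "ring (opp R)"
proof -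
  interpret ring R by fact
  show ?thesis
    apply (unfold_locales)
    apply (auto simp: opp_def m_assoc l_distr r_distr Units_def a_assoc intro: a_comm)
    by (metis a_inv_closed l_neg r_neg)
qed

definition regular_el :: "('a,'b) ring_scheme \<Rightarrow> 'a \<Rightarrow> bool" where
 "regular_el S x \<longleftrightarrow> (\<exists>y\<in>carrier S. x \<otimes>\<^bsub>S\<^esub> y \<otimes>\<^bsub>S\<^esub> x = x)"

lemma (in ring) lemma16:
  assumes x: "x \<in> carrier R" and y: "y \<in> carrier R" and z: "z \<in> carrier R"
  and az: "(x \<ominus> x \<otimes> y \<otimes> x) \<otimes> z \<otimes> (x \<ominus> x \<otimes> y \<otimes> x) = x \<ominus> x \<otimes> y \<otimes> x"
  shows "x \<otimes> (y \<oplus> (\<one> \<ominus> y \<otimes> x) \<otimes> z \<otimes> (\<one> \<ominus> x \<otimes> y)) \<otimes> x = x"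
proof -
  have v: "x \<otimes> (\<one> \<ominus> y \<otimes> x) = x \<ominus> x \<otimes> y \<otimes> x" using x y
    by (simp add: r_distr minus_eq r_minus m_assoc)
  have u: "(\<one> \<ominus> x \<otimes> y) \<otimes> x = x \<ominus> x \<otimes> y \<otimes> x" using x y
    by (simp add: l_distr minus_eq l_minus m_assoc)
  have "x \<otimes> ((\<one> \<ominus> y \<otimes> x) \<otimes> z \<otimes> (\<one> \<ominus> x \<otimes> y)) \<otimes> x
      = (x \<otimes> (\<one> \<ominus> y \<otimes> x)) \<otimes> z \<otimes> ((\<one> \<ominus> x \<otimes> y) \<otimes> x)" using x y z by (simp add: m_assoc)
  also have "\<dots> = x \<ominus> x \<otimes> y \<otimes> x" using v u az by simp
  finally have 1: "x \<otimes> ((\<one> \<ominus> y \<otimes> x) \<otimes> z \<otimes> (\<one> \<ominus> x \<otimes> y)) \<otimes> x = x \<ominus> x \<otimes> y \<otimes> x" .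
  have "x \<otimes> (y \<oplus> (\<one> \<ominus> y \<otimes> x) \<otimes> z \<otimes> (\<one> \<ominus> x \<otimes> y)) \<otimes> x
     = x \<otimes> y \<otimes> x \<oplus> x \<otimes> ((\<one> \<ominus> y \<otimes> x) \<otimes> z \<otimes> (\<one> \<ominus> x \<otimes> y)) \<otimes> x"
    using x y z by (simp add: r_distr l_distr)
  also have "\<dots> = x" unfolding 1 using x y by (simp add: minus_eq a_ac r_neg)
  finally show ?thesis .
qed

lemma (in ring) reg_lemma16:
  assumes x: "x \<in> carrier R" and y: "y \<in> carrier R"
  and r: "regular_el R (x \<ominus> x \<otimes> y \<otimes> x)"
  shows "regular_el R x"
proof -
  from r obtain z where z: "z \<in> carrier R" "(x \<ominus> x \<otimes> y \<otimes> x) \<otimes> z \<otimes> (x \<ominus> x \<otimes> y \<otimes> x) = x \<ominus> x \<otimes> y \<otimes> x"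
    unfolding regular_el_def by auto
  have w: "y \<oplus> (\<one> \<ominus> y \<otimes> x) \<otimes> z \<otimes> (\<one> \<ominus> x \<otimes> y) \<in> carrier R" using x y z by simp
  show ?thesis unfolding regular_el_def using lemma16[OF x y z] w by blast
qed

lemma (in ring) row_step:
  assumes e: "e \<in> carrier R" and f: "f \<in> carrier R" and q: "q \<in> carrier R" and B: "B \<in> carrier R"
  and ee: "e \<otimes> e = e" and ff: "f \<otimes> f = f" and ef: "e \<otimes> f = \<zero>" and fe: "f \<otimes> e = \<zero>"
  and qq: "q \<otimes> q = q" and Bs: "(e \<oplus> f) \<otimes> B \<otimes> q = B"
  and rb: "regular_el R (e \<otimes> B)"
  and rX: "\<And>X. X \<in> carrier R \<Longrightarrow> f \<otimes> X \<otimes> q = X \<Longrightarrow> regular_el R X"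
  shows "regular_el R B"
proof -
  from rb obtain Z where Z: "Z \<in> carrier R" and bZb: "e \<otimes> B \<otimes> Z \<otimes> (e \<otimes> B) = e \<otimes> B"
    unfolding regular_el_def by auto
  define Z' where "Z' = q \<otimes> Z \<otimes> e"
  have Z': "Z' \<in> carrier R" using q Z e by (simp add: Z'_def)
  have eef: "e \<otimes> (e \<oplus> f) = e" using e f ee ef by (simp add: r_distr)
  have fef: "f \<otimes> (e \<oplus> f) = f" using e f ff fe by (simp add: r_distr)
  have h1: "e \<otimes> B \<otimes> q = e \<otimes> B"
  proof -
    have "e \<otimes> B = e \<otimes> ((e \<oplus> f) \<otimes> B \<otimes> q)" using Bs by simp
    also have "\<dots> = (e \<otimes> (e \<oplus> f)) \<otimes> B \<otimes> q" using e f B q by (simp add: m_assoc)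
    finally have "e \<otimes> B = e \<otimes> B \<otimes> q" using eef by simp
    thus ?thesis by simp
  qed
  have h2: "f \<otimes> B \<otimes> q = f \<otimes> B"
  proof -
    have "f \<otimes> B = f \<otimes> ((e \<oplus> f) \<otimes> B \<otimes> q)" using Bs by simp
    also have "\<dots> = (f \<otimes> (e \<oplus> f)) \<otimes> B \<otimes> q" using e f B q by (simp add: m_assoc)
    finally have "f \<otimes> B = f \<otimes> B \<otimes> q" using fef by simp
    thus ?thesis by simp
  qed
  have h3: "B = e \<otimes> B \<oplus> f \<otimes> B"
  proof -
    have "(e \<oplus> f) \<otimes> B = (e \<oplus> f) \<otimes> ((e \<oplus> f) \<otimes> B \<otimes> q)" using Bs by simp
    also have "\<dots> = ((e \<oplus> f) \<otimes> (e \<oplus> f)) \<otimes> B \<otimes> q" using e f B q by (simp add: m_assoc)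
    also have "(e \<oplus> f) \<otimes> (e \<oplus> f) = e \<oplus> f" using e f eef fef by (simp add: l_distr)
    finally have "(e \<oplus> f) \<otimes> B = B" using Bs by simp
    thus ?thesis using e f B by (simp add: l_distr)
  qed
  have eeB: "e \<otimes> (e \<otimes> B) = e \<otimes> B" using e B ee by (simp add: m_assoc[symmetric])
  have h4: "Z' \<otimes> B = Z' \<otimes> (e \<otimes> B)" unfolding Z'_def using q Z e B eeB by (simp add: m_assoc)
  have h5: "e \<otimes> B \<otimes> Z' \<otimes> (e \<otimes> B) = e \<otimes> B"
  proof -
    have "e \<otimes> B \<otimes> Z' \<otimes> (e \<otimes> B) = (e \<otimes> B \<otimes> q) \<otimes> Z \<otimes> (e \<otimes> e \<otimes> B)" unfolding Z'_def
      using q Z e B by (simp add: m_assoc)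
    thus ?thesis using h1 ee bZb by simp
  qed
  have h6: "B \<otimes> Z' \<otimes> B = e \<otimes> B \<oplus> f \<otimes> B \<otimes> Z' \<otimes> (e \<otimes> B)"
  proof -
    have "B \<otimes> Z' \<otimes> B = B \<otimes> Z' \<otimes> (e \<otimes> B)" using h4 B Z' e by (simp add: m_assoc)
    also have "\<dots> = (e \<otimes> B \<oplus> f \<otimes> B) \<otimes> Z' \<otimes> (e \<otimes> B)" using h3 by simp
    also have "\<dots> = e \<otimes> B \<otimes> Z' \<otimes> (e \<otimes> B) \<oplus> f \<otimes> B \<otimes> Z' \<otimes> (e \<otimes> B)"
      using e f B Z' by (simp add: l_distr)
    finally show ?thesis using h5 by simp
  qed
  define X where "X = B \<ominus> B \<otimes> Z' \<otimes> B"
  have X: "X \<in> carrier R" unfolding X_def using B Z' by simp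
  have X2: "X = f \<otimes> B \<ominus> f \<otimes> B \<otimes> Z' \<otimes> (e \<otimes> B)"
    unfolding X_def h6 apply (subst (1) h3) using e f B Z'
    by (simp add: minus_eq minus_add a_assoc a_lcomm[of "e \<otimes> B"] r_neg2)
  have fX: "f \<otimes> X \<otimes> q = X"
  proof -
    have "f \<otimes> X \<otimes> q = (f \<otimes> f) \<otimes> B \<otimes> q \<ominus> (f \<otimes> f) \<otimes> B \<otimes> Z' \<otimes> (e \<otimes> B \<otimes> q)"
      unfolding X2 using e f B Z' q by (simp add: minus_eq r_distr l_distr r_minus l_minus m_assoc)
    also have "\<dots> = X" unfolding X2 ff h1 using h2 f B by (simp add: m_assoc)
    finally show ?thesis .
  qed
  have "regular_el R X" by (rule rX[OF X fX])
  thus ?thesis using reg_lemma16[OF B Z'] unfolding X_def by simp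
qed


lemma set_add_mem: "x \<in> I <+>\<^bsub>R\<^esub> J \<longleftrightarrow> (\<exists>a\<in>I. \<exists>b\<in>J. x = a \<oplus>\<^bsub>R\<^esub> b)"
  by (auto simp: set_add_def')

lemma (in ring) eS_subgroup:
  assumes e: "e \<in> carrier R"
  shows "additive_subgroup ((\<lambda>s. e \<otimes> s) ` carrier R) R"
proof (rule additive_subgroupI, rule add.subgroupI)
  show "(\<otimes>) e ` carrier R \<subseteq> carrier R" using e by auto
  show "(\<otimes>) e ` carrier R \<noteq> {}" by auto
  fix a assume "a \<in> (\<otimes>) e ` carrier R"
  then obtain s where s: "s \<in> carrier R" "a = e \<otimes> s" by auto
  show "\<ominus> a \<in> (\<otimes>) e ` carrier R"
    using s e by (auto simp: r_minus[symmetric] intro!: image_eqI[of _ _ "\<ominus> s"])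
next
  fix a b assume "a \<in> (\<otimes>) e ` carrier R" "b \<in> (\<otimes>) e ` carrier R"
  then obtain s t where s: "s \<in> carrier R" "a = e \<otimes> s" "t \<in> carrier R" "b = e \<otimes> t" by auto
  show "a \<oplus> b \<in> (\<otimes>) e ` carrier R"
    using s e by (auto simp: r_distr[symmetric] intro!: image_eqI[of _ _ "s \<oplus> t"])
qed

lemma (in ring) eS_right_ideal:
  assumes e: "e \<in> carrier R"
  shows "right_ideal_of R ((\<lambda>s. e \<otimes> s) ` carrier R)"
  unfolding right_ideal_of_def using eS_subgroup[OF e] e
  by (auto simp: m_assoc intro!: image_eqI)

lemma (in ring) idem_summand:
  assumes e: "e \<in> carrier R" and ee: "e \<otimes> e = e"
  shows "right_summand R ((\<lambda>s. e \<otimes> s) ` carrier R)"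
  unfolding right_summand_def
proof (intro conjI exI)
  show "right_ideal_of R ((\<otimes>) e ` carrier R)" by (rule eS_right_ideal[OF e])
  let ?f = "\<one> \<ominus> e"
  have f: "?f \<in> carrier R" using e by simp
  show "right_ideal_of R ((\<otimes>) ?f ` carrier R)" by (rule eS_right_ideal[OF f])
  have ef: "e \<otimes> ?f = \<zero>" using e ee by (simp add: minus_eq r_distr r_minus r_neg)
  show "(\<otimes>) e ` carrier R \<inter> (\<otimes>) ?f ` carrier R = {\<zero>}"
  proof
    show "{\<zero>} \<subseteq> (\<otimes>) e ` carrier R \<inter> (\<otimes>) ?f ` carrier R"
      using e f by (auto intro!: image_eqI[of _ _ \<zero>])
    show "(\<otimes>) e ` carrier R \<inter> (\<otimes>) ?f ` carrier R \<subseteq> {\<zero>}"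
    proof
      fix x assume "x \<in> (\<otimes>) e ` carrier R \<inter> (\<otimes>) ?f ` carrier R"
      then obtain s t where s: "s \<in> carrier R" "x = e \<otimes> s" "t \<in> carrier R" "x = ?f \<otimes> t" by auto
      have "e \<otimes> x = x" using s e ee by (simp add: m_assoc[symmetric])
      moreover have "e \<otimes> x = \<zero>" using s(3,4) e f ef by (simp add: m_assoc[symmetric])
      ultimately show "x \<in> {\<zero>}" by simp
    qed
  qed
  show "(\<otimes>) e ` carrier R <+> (\<otimes>) ?f ` carrier R = carrier R"
  proof
    show "(\<otimes>) e ` carrier R <+> (\<otimes>) ?f ` carrier R \<subseteq> carrier R"
      using e f by (auto simp: set_add_mem)
    show "carrier R \<subseteq> (\<otimes>) e ` carrier R <+> (\<otimes>) ?f ` carrier R"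
    proof
      fix x assume x: "x \<in> carrier R"
      have "x = e \<otimes> x \<oplus> ?f \<otimes> x" using x e by (simp add: minus_eq l_distr l_minus a_lcomm[of "e \<otimes> x"] r_neg2 r_neg)
      thus "x \<in> (\<otimes>) e ` carrier R <+> (\<otimes>) ?f ` carrier R" using x by (auto simp: set_add_mem)
    qed
  qed
qed

lemma (in ring) summand_idem:
  assumes I: "right_summand R I"
  shows "\<exists>e\<in>I. e \<in> carrier R \<and> e \<otimes> e = e \<and> I = (\<lambda>s. e \<otimes> s) ` carrier R"
proof -
  from I obtain J where Ii: "right_ideal_of R I" and Ji: "right_ideal_of R J"
    and IJ: "I \<inter> J = {\<zero>}" and S: "I <+> J = carrier R" unfolding right_summand_def by auto
  interpret Ia: additive_subgroup I R using Ii unfolding right_ideal_of_def by auto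
  interpret Ja: additive_subgroup J R using Ji unfolding right_ideal_of_def by auto
  have "\<one> \<in> I <+> J" using S by simp
  then obtain e k where e: "e \<in> I" and k: "k \<in> J" and ek: "\<one> = e \<oplus> k" by (auto simp: set_add_mem)
  have ec: "e \<in> carrier R" and kc: "k \<in> carrier R" using e k Ia.a_subset Ja.a_subset by auto
  have key: "e \<otimes> x = x" if x: "x \<in> I" for x
  proof -
    have xc: "x \<in> carrier R" using x Ia.a_subset by auto
    have "(e \<oplus> k) \<otimes> x = e \<otimes> x \<oplus> k \<otimes> x" using xc ec kc by (simp add: l_distr)
    hence 1: "x = e \<otimes> x \<oplus> k \<otimes> x" using ek[symmetric] xc by simp
    have kJ: "k \<otimes> x \<in> J" using Ji k xc unfolding right_ideal_of_def by auto
    have eI: "e \<otimes> x \<in> I" using Ii e xc unfolding right_ideal_of_def by auto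
    have "x \<ominus> e \<otimes> x = (e \<otimes> x \<oplus> k \<otimes> x) \<ominus> e \<otimes> x" using 1 by simp
    also have "\<dots> = k \<otimes> x" using xc ec kc by (simp add: minus_eq a_assoc a_comm[of "e \<otimes> x" "k \<otimes> x"] r_neg)
    finally have "k \<otimes> x = x \<ominus> e \<otimes> x" by simp
    hence "k \<otimes> x \<in> I" using x eI by (simp add: minus_eq)
    hence "k \<otimes> x = \<zero>" using kJ IJ by auto
    thus ?thesis using 1 ec xc by simp
  qed
  have Ieq: "I = (\<lambda>s. e \<otimes> s) ` carrier R"
  proof
    show "I \<subseteq> (\<lambda>s. e \<otimes> s) ` carrier R" using key Ia.a_subset by (force intro: image_eqI)
    show "(\<lambda>s. e \<otimes> s) ` carrier R \<subseteq> I" using Ii e unfolding right_ideal_of_def by auto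
  qed
  show ?thesis using e ec key[OF e] Ieq by blast
qed


definition regular_ring :: "('a,'b) ring_scheme \<Rightarrow> bool" where
  "regular_ring R \<longleftrightarrow> (\<forall>x\<in>carrier R. regular_el R x)"

lemma (in ring) assocI: assumes "a \<in> carrier R" "b \<in> carrier R" "c \<in> carrier R" "a \<otimes> b = c"
  shows "\<And>x. x \<in> carrier R \<Longrightarrow> a \<otimes> (b \<otimes> x) = c \<otimes> x"
  using assms by (simp add: m_assoc[symmetric])

lemma (in ring) sum_two_summands:
  assumes reg: "regular_ring R"
  and e: "e \<in> carrier R" and ee: "e \<otimes> e = e" and f: "f \<in> carrier R" and ff: "f \<otimes> f = f"
  shows "\<exists>g\<in>carrier R. g \<otimes> g = g \<and>
     (\<lambda>s. e \<otimes> s) ` carrier R <+>\<^bsub>R\<^esub> (\<lambda>s. f \<otimes> s) ` carrier R = (\<lambda>s. g \<otimes> s) ` carrier R"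
proof -
  define n where "n = \<one> \<ominus> e"
  have n: "n \<in> carrier R" using e by (simp add: n_def)
  have en: "e \<otimes> n = \<zero>" using e ee by (simp add: n_def minus_eq r_distr r_minus r_neg)
  have ne: "n \<otimes> e = \<zero>" using e ee by (simp add: n_def minus_eq l_distr l_minus r_neg)
  have nn: "n \<otimes> n = n" using e ee en by (simp add: n_def minus_eq l_distr l_minus)
  have en': "\<And>x. x \<in> carrier R \<Longrightarrow> e \<otimes> (n \<otimes> x) = \<zero>" using en e n by (simp add: m_assoc[symmetric])
  have ne': "\<And>x. x \<in> carrier R \<Longrightarrow> n \<otimes> (e \<otimes> x) = \<zero>" using ne e n by (simp add: m_assoc[symmetric])
  note nn' = assocI[OF n n n nn]
  note ee' = assocI[OF e e e ee]
  have split: "\<And>x. x \<in> carrier R \<Longrightarrow> x = e \<otimes> x \<oplus> n \<otimes> x"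
    using e by (simp add: n_def minus_eq l_distr l_minus a_lcomm r_neg2 r_neg)
  define h where "h = n \<otimes> f"
  have h: "h \<in> carrier R" using n f by (simp add: h_def)
  obtain w where w: "w \<in> carrier R" and hwh: "h \<otimes> w \<otimes> h = h"
    using reg h unfolding regular_ring_def regular_el_def by auto
  define p where "p = h \<otimes> w"
  have p: "p \<in> carrier R" using h w by (simp add: p_def)
  have ph: "p \<otimes> h = h" using hwh by (simp add: p_def)
  have pp: "p \<otimes> p = p" using h w hwh by (simp add: p_def m_assoc[symmetric])
  have ep: "e \<otimes> p = \<zero>" using n f w by (simp add: p_def h_def m_assoc en')
  have np: "n \<otimes> p = p" using n f w by (simp add: p_def h_def m_assoc nn')
  define q where "q = p \<otimes> n"
  have q: "q \<in> carrier R" using p n by (simp add: q_def)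
  have qe: "q \<otimes> e = \<zero>" using p n e by (simp add: q_def m_assoc ne)
  have eq: "e \<otimes> q = \<zero>" using p n e by (simp add: q_def m_assoc[symmetric] ep)
  have qp: "q \<otimes> p = p" using p n by (simp add: q_def m_assoc np pp)
  have qq: "q \<otimes> q = q" using p n by (simp add: q_def m_assoc[symmetric] qp[unfolded q_def])
  define g where "g = e \<oplus> q"
  have g: "g \<in> carrier R" using e q by (simp add: g_def)
  have ge: "g \<otimes> e = e" using e q by (simp add: g_def l_distr ee qe)
  have gp: "g \<otimes> p = p" using e q p by (simp add: g_def l_distr ep qp)
  have gg: "g \<otimes> g = g" using e q by (simp add: g_def l_distr r_distr ee qe eq qq)
  note ge' = assocI[OF g e e ge]
  note gp' = assocI[OF g p p gp]
  note ph' = assocI[OF p h h ph]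
  have "(\<lambda>s. e \<otimes> s) ` carrier R <+>\<^bsub>R\<^esub> (\<lambda>s. f \<otimes> s) ` carrier R = (\<lambda>s. g \<otimes> s) ` carrier R"
  proof
    show "(\<lambda>s. e \<otimes> s) ` carrier R <+>\<^bsub>R\<^esub> (\<lambda>s. f \<otimes> s) ` carrier R \<subseteq> (\<lambda>s. g \<otimes> s) ` carrier R"
    proof
      fix x assume "x \<in> (\<lambda>s. e \<otimes> s) ` carrier R <+>\<^bsub>R\<^esub> (\<lambda>s. f \<otimes> s) ` carrier R"
      then obtain s t where s: "s \<in> carrier R" and t: "t \<in> carrier R" and x: "x = e \<otimes> s \<oplus> f \<otimes> t"
        by (auto simp: set_add_mem)
      have 1: "e \<otimes> s = g \<otimes> (e \<otimes> s)" using s ge' by simp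
      have "f \<otimes> t = e \<otimes> (f \<otimes> t) \<oplus> h \<otimes> t" using split[of "f \<otimes> t"] f t n by (simp add: h_def m_assoc)
      also have "h \<otimes> t = g \<otimes> (p \<otimes> (h \<otimes> t))" using h t ph' gp'[of "h \<otimes> t"] by simp
      also have "e \<otimes> (f \<otimes> t) = g \<otimes> (e \<otimes> (f \<otimes> t))" using f t ge' by simp
      finally have 2: "f \<otimes> t = g \<otimes> (e \<otimes> (f \<otimes> t) \<oplus> p \<otimes> (h \<otimes> t))"
        using g e f t p h by (simp add: r_distr)
      have "x = g \<otimes> (e \<otimes> s \<oplus> (e \<otimes> (f \<otimes> t) \<oplus> p \<otimes> (h \<otimes> t)))"
        unfolding x using 1 2 g e f t p h s by (metis r_distr m_closed add.m_closed)
      thus "x \<in> (\<lambda>s. g \<otimes> s) ` carrier R" using e f t p h s by auto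
    qed
    show "(\<lambda>s. g \<otimes> s) ` carrier R \<subseteq> (\<lambda>s. e \<otimes> s) ` carrier R <+>\<^bsub>R\<^esub> (\<lambda>s. f \<otimes> s) ` carrier R"
    proof
      fix x assume "x \<in> (\<lambda>s. g \<otimes> s) ` carrier R"
      then obtain s where s: "s \<in> carrier R" and x: "x = g \<otimes> s" by auto
      define u where "u = w \<otimes> (n \<otimes> s)"
      have u: "u \<in> carrier R" using w n s by (simp add: u_def)
      have "q \<otimes> s = n \<otimes> (f \<otimes> u)" using n f w s by (simp add: q_def p_def h_def u_def m_assoc)
      also have "\<dots> = f \<otimes> u \<ominus> e \<otimes> (f \<otimes> u)" using e f u by (simp add: n_def minus_eq l_distr l_minus a_comm)
      finally have qs: "q \<otimes> s = f \<otimes> u \<ominus> e \<otimes> (f \<otimes> u)" .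
      have "x = e \<otimes> s \<oplus> (f \<otimes> u \<ominus> e \<otimes> (f \<otimes> u))" using x qs e q s by (simp add: g_def l_distr)
      also have "\<dots> = e \<otimes> (s \<ominus> f \<otimes> u) \<oplus> f \<otimes> u" using e f u s
        by (simp add: minus_eq r_distr r_minus a_ac)
      finally show "x \<in> (\<lambda>s. e \<otimes> s) ` carrier R <+>\<^bsub>R\<^esub> (\<lambda>s. f \<otimes> s) ` carrier R"
        using s f u by (auto simp: set_add_mem)
    qed
  qed
  thus ?thesis using g gg by blast
qed

lemma (in ring) regular_right_SSP:
  assumes reg: "regular_ring R" shows "right_SSP R"
  unfolding right_SSP_def
proof (intro allI impI)
  fix I J assume "right_summand R I \<and> right_summand R J"
  then obtain e f where e: "e \<in> carrier R" "e \<otimes> e = e" "I = (\<lambda>s. e \<otimes> s) ` carrier R"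
    and f: "f \<in> carrier R" "f \<otimes> f = f" "J = (\<lambda>s. f \<otimes> s) ` carrier R"
    using summand_idem by meson
  from sum_two_summands[OF reg e(1,2) f(1,2)] obtain g where
    "g \<in> carrier R" "g \<otimes> g = g" "I <+>\<^bsub>R\<^esub> J = (\<lambda>s. g \<otimes> s) ` carrier R" using e f by auto
  thus "right_summand R (I <+>\<^bsub>R\<^esub> J)" using idem_summand by simp
qed


lemma add_monoid_opp: "add_monoid (opp R) = add_monoid R" by (simp add: opp_def)

lemma additive_subgroup_opp: "additive_subgroup I (opp R) = additive_subgroup I R"
  by (simp add: additive_subgroup_def add_monoid_opp)

lemma set_add_opp: "I <+>\<^bsub>opp R\<^esub> J = I <+>\<^bsub>R\<^esub> J"
  by (simp add: set_add_def add_monoid_opp)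

lemma left_SSP_opp: "left_SSP R = right_SSP (opp R)"
  unfolding left_SSP_def right_SSP_def left_summand_def right_summand_def
    left_ideal_of_def right_ideal_of_def
  by (simp add: additive_subgroup_opp set_add_opp)

lemma regular_el_opp: assumes "ring R" "x \<in> carrier R" shows "regular_el (opp R) x = regular_el R x"
proof -
  interpret ring R by fact
  show ?thesis unfolding regular_el_def using assms(2) by (auto simp: m_assoc)
qed

lemma regular_ring_opp: assumes "ring R" shows "regular_ring (opp R) = regular_ring R"
  unfolding regular_ring_def using regular_el_opp[OF assms] by auto

lemma regular_SSP: assumes "ring R" "regular_ring R" shows "SSP R"
  unfolding SSP_def left_SSP_opp
  using ring.regular_right_SSP[OF assms] ring.regular_right_SSP[OF ring_opp[OF assms(1)]]
    regular_ring_opp[OF assms(1)] assms(2) by auto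

lemma (in ring) col_step:
  assumes e: "e \<in> carrier R" and f: "f \<in> carrier R" and p: "p \<in> carrier R" and B: "B \<in> carrier R"
  and ee: "e \<otimes> e = e" and ff: "f \<otimes> f = f" and ef: "e \<otimes> f = \<zero>" and fe: "f \<otimes> e = \<zero>"
  and pp: "p \<otimes> p = p" and Bs: "p \<otimes> B \<otimes> (e \<oplus> f) = B"
  and rb: "regular_el R (B \<otimes> e)"
  and rX: "\<And>X. X \<in> carrier R \<Longrightarrow> p \<otimes> X \<otimes> f = X \<Longrightarrow> regular_el R X"
  shows "regular_el R B"
proof -
  interpret O: ring "opp R" by (rule ring_opp, rule ring_axioms)
  have "regular_el (opp R) B"
    apply (rule O.row_step[of e f p B])
    using e f p B ee ff ef fe pp Bs rb
    by (auto simp: regular_el_opp[OF ring_axioms] m_assoc intro: rX)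
  thus ?thesis using regular_el_opp[OF ring_axioms B] by simp
qed


definition Pm :: "nat \<Rightarrow> nat set \<Rightarrow> 'a::ring_1 mat" where
  "Pm n I = mat n n (\<lambda>(i,j). if i = j \<and> i \<in> I then 1 else 0)"

lemma sum_if_eq1: "j < (n::nat) \<Longrightarrow> (\<Sum>k=0..<n. if k = j \<and> P k then (c::'a::comm_monoid_add) else 0) = (if P j then c else 0)"
proof -
  assume j: "j < n"
  have "(\<Sum>k=0..<n. if k = j \<and> P k then c else 0) = (\<Sum>k=0..<n. if k = j then (if P j then c else 0) else 0)"
    by (rule sum.cong) auto
  also have "\<dots> = (if P j then c else 0)" using j by (cases "P j") simp_all
  finally show ?thesis .
qed

lemma sum_if_eq2: "j < (n::nat) \<Longrightarrow> (\<Sum>k=0..<n. if j = k \<and> P k then (c::'a::comm_monoid_add) else 0) = (if P j then c else 0)"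
  using sum_if_eq1[of j n P c] by (simp add: eq_commute[of j])

lemma Pm_carrier[simp]: "Pm n I \<in> carrier_mat n n" by (simp add: Pm_def)

lemma Pm_left: assumes A: "A \<in> carrier_mat n m" and i: "i < n" and j: "j < m"
  shows "(Pm n I * A) $$ (i,j) = (if i \<in> I then A $$ (i,j) else 0)"
  using A i j by (simp add: Pm_def scalar_prod_def row_def col_def if_distrib[of "\<lambda>x. x * _"] sum_if_eq1 sum_if_eq2 cong: if_cong)

lemma Pm_right: assumes A: "A \<in> carrier_mat m n" and i: "i < m" and j: "j < n"
  shows "(A * Pm n J) $$ (i,j) = (if j \<in> J then A $$ (i,j) else 0)"
  using A i j by (simp add: Pm_def scalar_prod_def row_def col_def if_distrib[of "\<lambda>x. _ * x"] sum_if_eq1 sum_if_eq2 cong: if_cong)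

lemma Pm_mult: "Pm n I * Pm n J = (Pm n (I \<inter> J) :: 'a::ring_1 mat)"
proof (rule eq_matI)
  fix i j assume "i < dim_row (Pm n (I \<inter> J) :: 'a mat)" "j < dim_col (Pm n (I \<inter> J) :: 'a mat)"
  hence ij: "i < n" "j < n" by (auto simp: Pm_def)
  show "(Pm n I * Pm n J) $$ (i, j) = (Pm n (I \<inter> J) :: 'a mat) $$ (i, j)"
    by (subst Pm_left[OF Pm_carrier ij]) (use ij in \<open>auto simp: Pm_def\<close>)
qed (auto simp: Pm_def)

lemma Pm_add: "I \<inter> J = {} \<Longrightarrow> Pm n I + Pm n J = (Pm n (I \<union> J) :: 'a::ring_1 mat)"
  by (rule eq_matI, auto simp: Pm_def)

lemma Pm_empty: "Pm n {} = (0\<^sub>m n n :: 'a::ring_1 mat)"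
  by (rule eq_matI, auto simp: Pm_def)

lemma Pm_all: "Pm n {..<n} = (1\<^sub>m n :: 'a::ring_1 mat)"
  by (rule eq_matI, auto simp: Pm_def)


lemma Pm_dims[simp]: "dim_row (Pm n I) = n" "dim_col (Pm n I) = n" by (auto simp: Pm_def)

lemma ring_mat1': "ring (ring_mat (ty::'a :: ring_1 itself) n b)"
  by (unfold_locales, insert add_inv_exists_mat, auto simp: ring_mat_def algebra_simps Units_def)

lemma regular_el_mat: "regular_el (ring_mat (ty::'a::ring_1 itself) n b) A \<longleftrightarrow>
   (\<exists>Y\<in>carrier_mat n n. A * Y * A = A)"
  by (simp add: regular_el_def ring_mat_simps)

lemma Pm_absorb: assumes A: "A \<in> carrier_mat n n" and eq: "Pm n I * A * Pm n J = (A::'a::ring_1 mat)"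
  shows "A * Pm n J = A" "Pm n I * A = A"
proof -
  have "A * Pm n J = (Pm n I * A * Pm n J) * Pm n J" using eq by simp
  also have "\<dots> = Pm n I * A * (Pm n J * Pm n J)" by (rule assoc_mult_mat) (use A in auto)
  finally have "A * Pm n J = Pm n I * A * (Pm n J * Pm n J)" .
  thus "A * Pm n J = A" using eq by (simp add: Pm_mult)
  have "Pm n I * A = Pm n I * (Pm n I * A * Pm n J)" using eq by simp
  also have "\<dots> = Pm n I * (Pm n I * A) * Pm n J"
    by (rule assoc_mult_mat[symmetric]) (use A in auto)
  also have "\<dots> = (Pm n I * Pm n I) * A * Pm n J"
    using A by (simp add: assoc_mult_mat[symmetric, of "Pm n I" n n "Pm n I" n A n])
  finally have "Pm n I * A = (Pm n I * Pm n I) * A * Pm n J" .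
  thus "Pm n I * A = A" using eq by (simp add: Pm_mult)
qed

lemma Pm_zero_out: assumes "i \<ge> n" shows "Pm n {i} = (0\<^sub>m n n :: 'a::ring_1 mat)"
  using assms by (intro eq_matI) (auto simp: Pm_def)

lemma base_case:
  fixes A :: "'a::ring_1 mat"
  assumes reg: "vN_regular (ty::'a itself)" and A: "A \<in> carrier_mat n n"
    and eq: "Pm n {i} * A * Pm n {j} = A"
  shows "\<exists>Y\<in>carrier_mat n n. A * Y * A = A"
proof (cases "i < n \<and> j < n")
  case False
  hence "A = 0\<^sub>m n n" using eq A by (auto simp: Pm_zero_out)
  thus ?thesis by (intro bexI[of _ "0\<^sub>m n n"]) auto
next
  case True
  hence ij: "i < n" "j < n" by auto
  define \<alpha> where "\<alpha> = A $$ (i,j)"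
  obtain r where r: "\<alpha> = \<alpha> * r * \<alpha>" using reg unfolding vN_regular_def by blast
  have Aent: "A $$ (p,q) = (if p = i \<and> q = j then \<alpha> else 0)" if "p < n" "q < n" for p q
  proof -
    have "A $$ (p,q) = (Pm n {i} * A * Pm n {j}) $$ (p,q)" using eq by simp
    also have "\<dots> = (if q \<in> {j} then (Pm n {i} * A) $$ (p,q) else 0)"
      by (rule Pm_right) (use that A in auto)
    also have "\<dots> = (if p = i \<and> q = j then \<alpha> else 0)"
      using that A by (subst Pm_left[OF A]) (auto simp: \<alpha>_def)
    finally show ?thesis .
  qed
  have A0: "A = mat n n (\<lambda>(p,q). if p = i \<and> q = j then \<alpha> else 0)"
    using A Aent by (intro eq_matI) auto
  define Y where "Y = mat n n (\<lambda>(p,q). if p = j \<and> q = i then r else (0::'a))"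
  have AY: "A * Y = mat n n (\<lambda>(p,q). if p = i \<and> q = i then \<alpha> * r else 0)"
    unfolding A0 Y_def using ij
    by (intro eq_matI) (auto simp: scalar_prod_def row_def col_def if_distrib[of "\<lambda>x. x * _"] if_distrib[of "\<lambda>x. _ * x"] sum_if_eq1 sum_if_eq2 cong: if_cong)
  have "A * Y * A = mat n n (\<lambda>(p,q). if p = i \<and> q = j then \<alpha> * r * \<alpha> else 0)"
    unfolding AY apply (subst (1) A0) using ij
    by (intro eq_matI) (auto simp: scalar_prod_def row_def col_def if_distrib[of "\<lambda>x. x * _"] if_distrib[of "\<lambda>x. _ * x"] sum_if_eq1 sum_if_eq2 cong: if_cong)
  also have "\<dots> = A" by (subst A0) (simp only: r[symmetric])
  finally show ?thesis by (intro bexI[of _ Y]) (auto simp: Y_def)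
qed


lemma mat_assoc4:
  assumes "A \<in> carrier_mat n n" "B \<in> carrier_mat n n" "C \<in> carrier_mat n n" "D \<in> carrier_mat n n"
  shows "A * (B * C) * D = (A * B) * (C * D)" "(A * B) * C * D = (A * B) * (C * D)"
proof -
  have "A * (B * C) * D = A * ((B * C) * D)" using assms by (meson assoc_mult_mat mult_carrier_mat)
  also have "\<dots> = A * (B * (C * D))" using assms by (simp add: assoc_mult_mat[of B n n C n D n])
  also have "\<dots> = (A * B) * (C * D)" using assms by (simp add: assoc_mult_mat[of A n n B n "C * D" n])
  finally show "A * (B * C) * D = (A * B) * (C * D)" .
  have "(A * B) * C * D = (A * B) * (C * D)" using assms by (meson assoc_mult_mat mult_carrier_mat)
  thus "(A * B) * C * D = (A * B) * (C * D)" .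
qed

lemma mat_regular_aux:
  fixes ty :: "'a::ring_1 itself"
  assumes reg: "vN_regular ty"
  shows "finite I \<Longrightarrow> finite J \<Longrightarrow> (A::'a mat) \<in> carrier_mat n n \<Longrightarrow> Pm n I * A * Pm n J = A
    \<Longrightarrow> regular_el (ring_mat ty n b) A"
proof (induction "card I + card J" arbitrary: I J A rule: less_induct)
  case less
  interpret M: ring "ring_mat ty n b" by (rule ring_mat1')
  note A = less.prems(3) and eq = less.prems(4)
  show ?case
  proof (cases "I = {} \<or> J = {}")
    case True
    hence "A = 0\<^sub>m n n" using eq A by (auto simp: Pm_empty)
    thus ?thesis unfolding regular_el_mat by (intro bexI[of _ "0\<^sub>m n n"]) auto
  next
    case False
    then obtain i j where i: "i \<in> I" and j: "j \<in> J" by auto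
    show ?thesis
    proof (cases "card I \<ge> 2")
      case True
      define I' where "I' = I - {i}"
      have cI: "card I = Suc (card I')" using i less.prems(1) unfolding I'_def
        by (simp add: card_Suc_Diff1 card_gt_0_iff Suc_pred, metis card_gt_0_iff empty_iff Suc_pred)
      have fI': "finite I'" using less.prems(1) by (simp add: I'_def)
      show ?thesis
      proof (rule M.row_step[of "Pm n {i}" "Pm n I'" "Pm n J" A], unfold ring_mat_simps)
        show "Pm n {i} * Pm n {i} = (Pm n {i} :: 'a mat)" by (simp add: Pm_mult)
        show "Pm n I' * Pm n I' = (Pm n I' :: 'a mat)" by (simp add: Pm_mult)
        show "Pm n J * Pm n J = (Pm n J :: 'a mat)" by (simp add: Pm_mult)
        show "Pm n {i} * Pm n I' = (0\<^sub>m n n :: 'a mat)" by (simp add: Pm_mult I'_def Pm_empty)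
        show "Pm n I' * Pm n {i} = (0\<^sub>m n n :: 'a mat)" by (simp add: Pm_mult I'_def Pm_empty)
        have "Pm n {i} + Pm n I' = (Pm n I :: 'a mat)" using i by (subst Pm_add) (auto simp: I'_def insert_absorb)
        thus "(Pm n {i} + Pm n I') * A * Pm n J = A" using eq by simp
        show "regular_el (ring_mat ty n b) (Pm n {i} * A)"
        proof (rule less.hyps)
          show "card {i} + card J < card I + card J" using True by simp
          have "Pm n {i} * (Pm n {i} * A) * Pm n J = (Pm n {i} * Pm n {i}) * (A * Pm n J)"
            by (rule mat_assoc4(1)) (use A in auto)
          thus "Pm n {i} * (Pm n {i} * A) * Pm n J = Pm n {i} * A"
            using Pm_absorb[OF A eq] by (simp add: Pm_mult)
        qed (use A less.prems in auto)
        fix X :: "'a mat" assume X: "X \<in> carrier_mat n n" "Pm n I' * X * Pm n J = X"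
        show "regular_el (ring_mat ty n b) X"
          by (rule less.hyps[OF _ fI' less.prems(2) X]) (use cI in simp)
      qed (use A in auto)
    next
      case False
      have cI: "card I = 1" using False i less.prems(1)
        by (metis One_nat_def Suc_1 Suc_leI card_gt_0_iff empty_iff le_antisym not_le)
      then obtain i0 where I1: "I = {i0}" by (metis card_1_singletonE)
      show ?thesis
      proof (cases "card J \<ge> 2")
        case True
        define J' where "J' = J - {j}"
        have cJ: "card J = Suc (card J')" using j less.prems(2) unfolding J'_def
          by (simp add: card_Suc_Diff1 card_gt_0_iff Suc_pred, metis card_gt_0_iff empty_iff Suc_pred)
        have fJ': "finite J'" using less.prems(2) by (simp add: J'_def)
        show ?thesis
        proof (rule M.col_step[of "Pm n {j}" "Pm n J'" "Pm n I" A], unfold ring_mat_simps)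
          show "Pm n {j} * Pm n {j} = (Pm n {j} :: 'a mat)" by (simp add: Pm_mult)
          show "Pm n J' * Pm n J' = (Pm n J' :: 'a mat)" by (simp add: Pm_mult)
          show "Pm n I * Pm n I = (Pm n I :: 'a mat)" by (simp add: Pm_mult)
          show "Pm n {j} * Pm n J' = (0\<^sub>m n n :: 'a mat)" by (simp add: Pm_mult J'_def Pm_empty)
          show "Pm n J' * Pm n {j} = (0\<^sub>m n n :: 'a mat)" by (simp add: Pm_mult J'_def Pm_empty)
          have "Pm n {j} + Pm n J' = (Pm n J :: 'a mat)" using j by (subst Pm_add) (auto simp: J'_def insert_absorb)
          thus "Pm n I * A * (Pm n {j} + Pm n J') = A" using eq by simp
          show "regular_el (ring_mat ty n b) (A * Pm n {j})"
          proof (rule less.hyps)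
            show "card I + card {j} < card I + card J" using True by simp
            have "Pm n I * (A * Pm n {j}) * Pm n {j} = (Pm n I * A) * (Pm n {j} * Pm n {j})"
              by (rule mat_assoc4(1)) (use A in auto)
            thus "Pm n I * (A * Pm n {j}) * Pm n {j} = A * Pm n {j}"
              using Pm_absorb[OF A eq] by (simp add: Pm_mult)
          qed (use A less.prems in auto)
          fix X :: "'a mat" assume X: "X \<in> carrier_mat n n" "Pm n I * X * Pm n J' = X"
          show "regular_el (ring_mat ty n b) X"
            by (rule less.hyps[OF _ less.prems(1) fJ' X]) (use cJ in simp)
        qed (use A in auto)
      next
        case False
        have cJ: "card J = 1" using False j less.prems(2)
          by (metis One_nat_def Suc_1 Suc_leI card_gt_0_iff empty_iff le_antisym not_le)
        then obtain j0 where J1: "J = {j0}" by (metis card_1_singletonE)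
        show ?thesis unfolding regular_el_mat
          by (rule base_case[OF reg A]) (use eq I1 J1 in simp)
      qed
    qed
  qed
qed

lemma mat_regular_ring:
  fixes ty :: "'a::ring_1 itself"
  assumes reg: "vN_regular ty"
  shows "regular_ring (ring_mat ty n b)"
  unfolding regular_ring_def
proof
  fix A assume "A \<in> carrier (ring_mat ty n b)"
  hence A: "A \<in> carrier_mat n n" by (simp add: ring_mat_simps)
  show "regular_el (ring_mat ty n b) A"
    by (rule mat_regular_aux[OF reg, of "{..<n}" "{..<n}"]) (use A in \<open>auto simp: Pm_all\<close>)
qed

lemma reg_SSP_all: "vN_regular (ty::'a::ring_1 itself) \<Longrightarrow> SSP (Mat_ring ty n)"
  by (rule regular_SSP[OF ring_mat1' mat_regular_ring])


lemma SSP_reg: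
  fixes ty :: "'a::ring_1 itself"
  assumes n: "n > 1" and S: "right_SSP (ring_mat ty n b)"
  shows "vN_regular ty"
  unfolding vN_regular_def
proof
  fix a :: 'a
  interpret M: ring "ring_mat ty n b" by (rule ring_mat1')
  define c where "c = (\<lambda>p::nat. if p = 0 then 1 else if p = 1 then a else 0)"
  define e where "e = (Pm n {0} :: 'a mat)"
  define f where "f = mat n n (\<lambda>(p,q). if q = 0 then c p else 0)"
  have e: "e \<in> carrier_mat n n" and f: "f \<in> carrier_mat n n" by (auto simp: e_def f_def)
  have ee: "e * e = e" by (simp add: e_def Pm_mult)
  have ff: "f * f = f"
    unfolding f_def
    by (intro eq_matI) (auto simp: scalar_prod_def row_def col_def if_distrib[of "\<lambda>x. x * _"] c_def cong: if_cong)
  let ?eS = "(\<lambda>s. e * s) ` carrier_mat n n" and ?fS = "(\<lambda>s. f * s) ` carrier_mat n n"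
  have "right_summand (ring_mat ty n b) ?eS" using M.idem_summand[of e] e ee by (simp add: ring_mat_simps)
  moreover have "right_summand (ring_mat ty n b) ?fS" using M.idem_summand[of f] f ff by (simp add: ring_mat_simps)
  ultimately have T: "right_summand (ring_mat ty n b) (?eS <+>\<^bsub>ring_mat ty n b\<^esub> ?fS)"
    using S unfolding right_SSP_def by blast
  from M.summand_idem[OF T] obtain t where tT: "t \<in> ?eS <+>\<^bsub>ring_mat ty n b\<^esub> ?fS"
    and t: "t \<in> carrier_mat n n" and tt: "t * t = t"
    and Teq: "?eS <+>\<^bsub>ring_mat ty n b\<^esub> ?fS = (\<lambda>s. t * s) ` carrier_mat n n"
    by (auto simp: ring_mat_simps)
  from tT obtain s1 s2 where s1: "s1 \<in> carrier_mat n n" and s2: "s2 \<in> carrier_mat n n"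
    and ts: "t = e * s1 + f * s2" by (auto simp: set_add_mem ring_mat_simps)
  define D where "D = mat n n (\<lambda>(p,q). if p = 1 \<and> q = 0 then a else (0::'a))"
  have D: "D \<in> carrier_mat n n" by (simp add: D_def)
  have "D = e * (- (1\<^sub>m n)) + f * 1\<^sub>m n"
    using n e f by (intro eq_matI) (auto simp: D_def e_def f_def c_def Pm_def)
  hence "D \<in> ?eS <+>\<^bsub>ring_mat ty n b\<^esub> ?fS"
    unfolding set_add_mem ring_mat_simps by (intro bexI) auto
  then obtain s where s: "s \<in> carrier_mat n n" and Ds: "D = t * s" unfolding Teq by auto
  have tD: "t * D = D" unfolding Ds using t s tt by (simp add: assoc_mult_mat[symmetric, of t n n t n s n])
  have "(t * D) $$ (1,0) = t $$ (1,1) * a"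
    using n t by (simp add: D_def scalar_prod_def row_def col_def if_distrib[of "\<lambda>x. _ * x"] cong: if_cong)
  hence a1: "a = t $$ (1,1) * a" using tD n by (simp add: D_def)
  have "(e * s1) $$ (1,1) = 0" unfolding e_def using n s1 by (subst Pm_left) auto
  moreover have "(f * s2) $$ (1,1) = a * s2 $$ (0,1)"
    using n s2 by (simp add: f_def c_def scalar_prod_def row_def col_def if_distrib[of "\<lambda>x. x * _"] cong: if_cong)
  ultimately have "t $$ (1,1) = a * s2 $$ (0,1)" unfolding ts using n e f s1 s2 by simp
  thus "\<exists>y. a = a * y * a" using a1 by auto
qed

theorem theorem2p14:
  fixes ty :: "'a::ring_1 itself"
  shows "(vN_regular ty \<longleftrightarrow> SSP (Mat_ring ty 2))
       \<and> (SSP (Mat_ring ty 2) \<longleftrightarrow> (\<exists>n>1. SSP (Mat_ring ty n)))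
       \<and> ((\<exists>n>1. SSP (Mat_ring ty n)) \<longleftrightarrow> (\<forall>n>1. SSP (Mat_ring ty n)))"
proof -
  have A: "vN_regular ty \<Longrightarrow> SSP (Mat_ring ty n)" for n by (rule reg_SSP_all)
  have B: "n > 1 \<Longrightarrow> SSP (Mat_ring ty n) \<Longrightarrow> vN_regular ty" for n
    using SSP_reg[of n ty "()"] unfolding SSP_def by blast
  have two: "(1::nat) < 2" by simp
  show ?thesis using A B two by blast
qed

end
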